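(* Let $\varphi$ be a skew-morphism of a finite group $A$ of order $m$ with power function $\pi:A\to\mathbb{Z}_m$ and derived power function $\sigma_\pi$. Then for all nonnegative integers $k,k_1,k_2,q,r$: (a) $\sigma_\pi(xy,k)\equiv\sigma_\pi(y,\sigma_\pi(x,k))\pmod m$ for all $x,y\in A$; (b) $\sigma_\pi(x,k)\equiv0\pmod m$ for all $x\in A$ if and only if $m\mid k$; (c) $\sigma_\pi(x,mq+r)\equiv\sigma_\pi(x,r)\pmod m$ for all $x\in A$; (d) $\sigma_\pi(x,k_1)\equiv\sigma_\pi(x,k_2)\pmod m$ for all $x\in A$ if and only if $k_1\equiv k_2\pmod m$.
   Context: A skew-morphism of a finite group $A$ is a permutation $\varphi$ of $A$ with $\varphi(1_A)=1_A$ for which there is a function $\pi:A\to\mathbb{Z}_m$, $m$ the order of $\varphi$ as a permutation, such that $\varphi(xy)=\varphi(x)\varphi^{\pi(x)}(y)$ for all $x,y\in A$ ($\pi$ is the power function). The derived power function is $\sigma_\pi(x,0)=0$ and $\sigma_\pi(x,k)=\sum_{i=1}^{k}\pi(\varphi^{i-1}(x))$ (computed in $\mathbb{Z}_m$) for $k>0$; in (a) the inner value $\sigma_\pi(x,k)\in\mathbb{Z}_m$ is used as second argument via any nonnegative integer representative. *)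

theory Defs
  imports "HOL-Algebra.Group" "HOL-Number_Theory.Cong"
begin

definition perm_order :: "('a, 'b) monoid_scheme \<Rightarrow> ('a \<Rightarrow> 'a) \<Rightarrow> nat" where
  "perm_order G phi = (LEAST n. 0 < n \<and> (\<forall>x \<in> carrier G. (phi ^^ n) x = x))"

text \<open>phi is a skew-morphism of the finite group G with power function pi;
  values of pi in Z_m (m the order of phi) are represented by 0..m-1.\<close>
definition skew_morphism ::
  "('a, 'b) monoid_scheme \<Rightarrow> ('a \<Rightarrow> 'a) \<Rightarrow> ('a \<Rightarrow> nat) \<Rightarrow> bool" where
  "skew_morphism G phi pi \<longleftrightarrow>
     group G \<and> finite (carrier G) \<and>
     bij_betw phi (carrier G) (carrier G) \<and>
     phi \<one>\<^bsub>G\<^esub> = \<one>\<^bsub>G\<^esub> \<and>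
     (\<forall>x \<in> carrier G. pi x < perm_order G phi) \<and>
     (\<forall>x \<in> carrier G. \<forall>y \<in> carrier G.
        phi (x \<otimes>\<^bsub>G\<^esub> y) = phi x \<otimes>\<^bsub>G\<^esub> (phi ^^ pi x) y)"

text \<open>Derived power function sigma(x,k) = sum_{i=1..k} pi(phi^(i-1) x),
  as a natural number (its class mod m is the value in Z_m).\<close>
definition derived_power :: "('a \<Rightarrow> 'a) \<Rightarrow> ('a \<Rightarrow> nat) \<Rightarrow> 'a \<Rightarrow> nat \<Rightarrow> nat" where
  "derived_power phi pi x k = (\<Sum>i = 1..k. pi ((phi ^^ (i - 1)) x))"

end

theory Submission
  imports Defs "HOL-Library.FuncSet"
begin

locale skm =
  fixes G (structure) and phi :: "'a \<Rightarrow> 'a" and pi :: "'a \<Rightarrow> nat"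
  assumes sk: "skew_morphism G phi pi"
begin

lemma grp: "group G" and fin: "finite (carrier G)" and bij: "bij_betw phi (carrier G) (carrier G)"
  and one: "phi \<one> = \<one>"
  and hom: "\<And>x y. x \<in> carrier G \<Longrightarrow> y \<in> carrier G \<Longrightarrow> phi (x \<otimes> y) = phi x \<otimes> (phi ^^ pi x) y"
  using sk unfolding skew_morphism_def by auto

lemma lcancel: "x \<in> carrier G \<Longrightarrow> y \<in> carrier G \<Longrightarrow> z \<in> carrier G \<Longrightarrow> x \<otimes> y = x \<otimes> z \<Longrightarrow> y = z"
  using grp by (metis group.Units_eq group.is_monoid monoid.Units_l_cancel)

lemma lone: "x \<in> carrier G \<Longrightarrow> \<one> \<otimes> x = x"
  using grp by (metis group.is_monoid monoid.l_one)

lemma bijn: "bij_betw (phi ^^ n) (carrier G) (carrier G)"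
  using bij by (rule bij_betw_funpow)

lemma closed: "x \<in> carrier G \<Longrightarrow> (phi ^^ n) x \<in> carrier G"
  using bijn bij_betwE by blast

lemma injn: "inj_on (phi ^^ n) (carrier G)"
  using bijn bij_betw_def by blast

lemma one_n: "(phi ^^ n) \<one> = \<one>"
  by (induction n) (auto simp: one)

lemma exists_period: "\<exists>n. 0 < n \<and> (\<forall>x \<in> carrier G. (phi ^^ n) x = x)"
proof -
  let ?f = "\<lambda>n. restrict (phi ^^ n) (carrier G)"
  have "?f ` UNIV \<subseteq> carrier G \<rightarrow>\<^sub>E carrier G" using closed by auto
  moreover have "finite (carrier G \<rightarrow>\<^sub>E carrier G)" using fin by (intro finite_PiE) auto
  ultimately have "finite (?f ` UNIV)" by (rule finite_subset)
  from pigeonhole_infinite[OF infinite_UNIV_nat this]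
  obtain a where "infinite {b\<in>UNIV. ?f b = ?f a}" by blast
  then obtain b where b: "b > a" "?f b = ?f a"
    by (metis (mono_tags, lifting) finite_nat_set_iff_bounded_le mem_Collect_eq not_le)
  have "\<forall>x \<in> carrier G. (phi ^^ (b - a)) x = x"
  proof
    fix x assume x: "x \<in> carrier G"
    have "(phi ^^ a) ((phi ^^ (b - a)) x) = (phi ^^ b) x"
      using b(1) by (metis funpow_add le_add_diff_inverse less_imp_le_nat o_apply)
    also have "\<dots> = (phi ^^ a) x" using b(2) x by (metis restrict_apply')
    finally show "(phi ^^ (b - a)) x = x"
      using injn[of a] x closed inj_on_def by metis
  qed
  then show ?thesis using b(1) by (intro exI[of _ "b - a"]) auto
qed

definition "m = perm_order G phi"

lemma m_props: "0 < m" "\<And>x. x \<in> carrier G \<Longrightarrow> (phi ^^ m) x = x"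
  and m_least: "\<And>n. 0 < n \<Longrightarrow> n < m \<Longrightarrow> \<not> (\<forall>x \<in> carrier G. (phi ^^ n) x = x)"
  using LeastI_ex[OF exists_period] not_less_Least[of _ "\<lambda>n. 0 < n \<and> (\<forall>x \<in> carrier G. (phi ^^ n) x = x)"]
  unfolding m_def perm_order_def by auto

lemma pow_mult_m: "x \<in> carrier G \<Longrightarrow> (phi ^^ (m * q)) x = x"
proof (induction q)
  case 0 then show ?case by simp
next
  case (Suc q)
  have "(phi ^^ (m * Suc q)) x = (phi ^^ m) ((phi ^^ (m * q)) x)"
    by (simp add: funpow_add)
  then show ?case using Suc m_props by simp
qed

lemma pow_mod: "x \<in> carrier G \<Longrightarrow> (phi ^^ n) x = (phi ^^ (n mod m)) x"
proof -
  assume x: "x \<in> carrier G"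
  have "n = n mod m + m * (n div m)" by simp
  then have "(phi ^^ n) x = (phi ^^ (n mod m)) ((phi ^^ (m * (n div m))) x)"
    by (metis funpow_add o_apply)
  then show ?thesis using pow_mult_m x by simp
qed

lemma pow_eq_iff: "(\<forall>z \<in> carrier G. (phi ^^ a) z = (phi ^^ b) z) \<longleftrightarrow> [a = b] (mod m)"
proof
  assume "[a = b] (mod m)"
  then show "\<forall>z \<in> carrier G. (phi ^^ a) z = (phi ^^ b) z"
    using pow_mod unfolding cong_def by metis
next
  assume h: "\<forall>z \<in> carrier G. (phi ^^ a) z = (phi ^^ b) z"
  have gen: "[a' = b'] (mod m)" if le: "a' \<le> b'" and a': "a' < m" and b': "b' < m"
     and e: "\<forall>z \<in> carrier G. (phi ^^ a') z = (phi ^^ b') z" for a' b'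
  proof (rule ccontr)
    assume "\<not> [a' = b'] (mod m)"
    then have lt: "a' < b'" using le by (cases "a' = b'") auto
    have "\<forall>z \<in> carrier G. (phi ^^ (b' - a')) z = z"
    proof
      fix z assume z: "z \<in> carrier G"
      have "(phi ^^ a') ((phi ^^ (b' - a')) z) = (phi ^^ b') z"
        using lt by (metis funpow_add le_add_diff_inverse less_imp_le_nat o_apply)
      also have "\<dots> = (phi ^^ a') z" using e z by simp
      finally show "(phi ^^ (b' - a')) z = z"
        using injn[of a'] z closed inj_on_def by metis
    qed
    then show False using m_least[of "b' - a'"] lt b' by auto
  qed
  have e: "\<forall>z \<in> carrier G. (phi ^^ (a mod m)) z = (phi ^^ (b mod m)) z"
    using h pow_mod by metis
  have "[a mod m = b mod m] (mod m)"
  proof (cases "a mod m \<le> b mod m")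
    case True then show ?thesis using gen[of "a mod m" "b mod m"] e m_props(1) mod_less_divisor by blast
  next
    case False then show ?thesis using gen[of "b mod m" "a mod m"] e m_props(1)
      by (metis cong_sym_eq mod_less_divisor nat_le_linear)
  qed
  then show "[a = b] (mod m)" by (simp add: cong_def)
qed

lemma dp_Suc: "derived_power phi pi x (Suc k) = derived_power phi pi x k + pi ((phi ^^ k) x)"
  by (simp add: derived_power_def)

lemma dp_0: "derived_power phi pi x 0 = 0"
  by (simp add: derived_power_def)

lemma F: "x \<in> carrier G \<Longrightarrow> y \<in> carrier G \<Longrightarrow>
  (phi ^^ k) (x \<otimes> y) = (phi ^^ k) x \<otimes> (phi ^^ derived_power phi pi x k) y"
proof (induction k)
  case 0 then show ?case by (simp add: dp_0)
next
  case (Suc k)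
  have "(phi ^^ Suc k) (x \<otimes> y) = phi ((phi ^^ k) x \<otimes> (phi ^^ derived_power phi pi x k) y)"
    using Suc by simp
  also have "\<dots> = (phi ^^ Suc k) x \<otimes> (phi ^^ pi ((phi ^^ k) x)) ((phi ^^ derived_power phi pi x k) y)"
    using hom closed Suc.prems by simp
  also have "\<dots> = (phi ^^ Suc k) x \<otimes> (phi ^^ derived_power phi pi x (Suc k)) y"
  proof -
    have "(phi ^^ pi ((phi ^^ k) x)) ((phi ^^ derived_power phi pi x k) y)
       = (phi ^^ (pi ((phi ^^ k) x) + derived_power phi pi x k)) y" by (simp add: funpow_add)
    then show ?thesis by (simp add: dp_Suc add.commute)
  qed
  finally show ?case .
qed

lemma F1: "y \<in> carrier G \<Longrightarrow> (phi ^^ k) y = (phi ^^ derived_power phi pi \<one> k) y"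
  using F[of \<one> y k] grp closed lone by (simp add: one_n group.is_monoid)

lemma d_iff: "(\<forall>x \<in> carrier G. [derived_power phi pi x k1 = derived_power phi pi x k2] (mod m))
   \<longleftrightarrow> [k1 = k2] (mod m)"
proof
  assume h: "\<forall>x \<in> carrier G. [derived_power phi pi x k1 = derived_power phi pi x k2] (mod m)"
  have "\<forall>z \<in> carrier G. (phi ^^ k1) z = (phi ^^ k2) z"
    using F1 h pow_eq_iff grp by (metis group.is_monoid monoid.one_closed)
  then show "[k1 = k2] (mod m)" using pow_eq_iff by blast
next
  assume c: "[k1 = k2] (mod m)"
  show "\<forall>x \<in> carrier G. [derived_power phi pi x k1 = derived_power phi pi x k2] (mod m)"
  proof
    fix x assume x: "x \<in> carrier G"
    have e: "\<forall>z \<in> carrier G. (phi ^^ k1) z = (phi ^^ k2) z" using c pow_eq_iff by blast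
    have "\<forall>y \<in> carrier G. (phi ^^ derived_power phi pi x k1) y = (phi ^^ derived_power phi pi x k2) y"
    proof
      fix y assume y: "y \<in> carrier G"
      have "(phi ^^ k1) x \<otimes> (phi ^^ derived_power phi pi x k1) y
          = (phi ^^ k1) x \<otimes> (phi ^^ derived_power phi pi x k2) y"
        using F[OF x y, of k1] F[OF x y, of k2] e x y grp
        by (metis group.is_monoid monoid.m_closed)
      then show "(phi ^^ derived_power phi pi x k1) y = (phi ^^ derived_power phi pi x k2) y"
        using grp closed x y by (metis lcancel)
    qed
    then show "[derived_power phi pi x k1 = derived_power phi pi x k2] (mod m)"
      using pow_eq_iff by blast
  qed
qed

lemma a_part: "x \<in> carrier G \<Longrightarrow> y \<in> carrier G \<Longrightarrow> [j = derived_power phi pi x k] (mod m) \<Longrightarrow>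
  [derived_power phi pi (x \<otimes> y) k = derived_power phi pi y j] (mod m)"
proof -
  assume x: "x \<in> carrier G" and y: "y \<in> carrier G" and j: "[j = derived_power phi pi x k] (mod m)"
  let ?s = "derived_power phi pi x k"
  have xy: "x \<otimes> y \<in> carrier G" using x y grp by (metis group.is_monoid monoid.m_closed)
  have "\<forall>z \<in> carrier G. (phi ^^ derived_power phi pi (x \<otimes> y) k) z = (phi ^^ derived_power phi pi y ?s) z"
  proof
    fix z assume z: "z \<in> carrier G"
    have yz: "y \<otimes> z \<in> carrier G" using z y grp by (metis group.is_monoid monoid.m_closed)
    have "(phi ^^ k) (x \<otimes> y \<otimes> z) = (phi ^^ k) x \<otimes> (phi ^^ ?s) y \<otimes> (phi ^^ derived_power phi pi (x \<otimes> y) k) z"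
      using F[OF xy z] F[OF x y] by simp
    moreover have "(phi ^^ k) (x \<otimes> (y \<otimes> z)) = (phi ^^ k) x \<otimes> ((phi ^^ ?s) y \<otimes> (phi ^^ derived_power phi pi y ?s) z)"
      using F[OF x yz] F[OF y z] by simp
    moreover have "x \<otimes> y \<otimes> z = x \<otimes> (y \<otimes> z)" using x y z grp by (metis group.is_monoid monoid.m_assoc)
    ultimately have "(phi ^^ k) x \<otimes> (phi ^^ ?s) y \<otimes> (phi ^^ derived_power phi pi (x \<otimes> y) k) z
        = (phi ^^ k) x \<otimes> (phi ^^ ?s) y \<otimes> (phi ^^ derived_power phi pi y ?s) z"
      using x y z closed grp by (metis group.is_monoid monoid.m_assoc)
    then show "(phi ^^ derived_power phi pi (x \<otimes> y) k) z = (phi ^^ derived_power phi pi y ?s) z"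
      using grp closed x y z by (metis lcancel group.is_monoid monoid.m_closed)
  qed
  then have "[derived_power phi pi (x \<otimes> y) k = derived_power phi pi y ?s] (mod m)"
    using pow_eq_iff by blast
  moreover have "[derived_power phi pi y ?s = derived_power phi pi y j] (mod m)"
    using d_iff j y by (meson cong_sym)
  ultimately show ?thesis using cong_trans by blast
qed

end

theorem proposition2p4:
  fixes G (structure) and phi :: "'a \<Rightarrow> 'a" and pi :: "'a \<Rightarrow> nat" and m :: nat
  assumes "skew_morphism G phi pi"
    and "m = perm_order G phi"
  shows "(\<forall>x \<in> carrier G. \<forall>y \<in> carrier G. \<forall>k j.
            [j = derived_power phi pi x k] (mod m) \<longrightarrow>
            [derived_power phi pi (x \<otimes> y) k = derived_power phi pi y j] (mod m))
       \<and> (\<forall>k. (\<forall>x \<in> carrier G. [derived_power phi pi x k = 0] (mod m)) \<longleftrightarrow> m dvd k)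
       \<and> (\<forall>x \<in> carrier G. \<forall>q r.
            [derived_power phi pi x (m * q + r) = derived_power phi pi x r] (mod m))
       \<and> (\<forall>k1 k2. (\<forall>x \<in> carrier G.
              [derived_power phi pi x k1 = derived_power phi pi x k2] (mod m))
            \<longleftrightarrow> [k1 = k2] (mod m))"
proof -
  interpret skm G phi pi using assms(1) by unfold_locales
  have mm: "m = skm.m G phi" using assms(2) m_def by simp
  have D: "\<And>k1 k2. (\<forall>x \<in> carrier G. [derived_power phi pi x k1 = derived_power phi pi x k2] (mod m))
            \<longleftrightarrow> [k1 = k2] (mod m)" using d_iff mm by simp
  have B: "(\<forall>x \<in> carrier G. [derived_power phi pi x k = 0] (mod m)) \<longleftrightarrow> m dvd k" for k
    using D[of k 0] by (simp add: dp_0 cong_0_iff)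
  have C: "[derived_power phi pi x (m * q + r) = derived_power phi pi x r] (mod m)"
    if "x \<in> carrier G" for x q r
    using D[of "m * q + r" r] that by (simp add: cong_def)
  show ?thesis using a_part mm B C D by simp
qed

end
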